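(* Let $\mathcal{A} \subseteq 2^{[8]}$ consist of the following 11 sets: $A_0=[8]$, $A_1=\{2,4,6,7,8\}$, $A_2=\{1,3,5,8\}$, $A_3=\{1,4,7,8\}$, $A_4=\{2,3,5,6\}$, $A_5=\{1,3,7\}$, $A_6=\{2,3,5\}$, $A_7=\{2,4,6\}$, $A_8=\{4,5,6,7\}$, $B_{1,2}=\{8\}$, $B_{3,4}=\{1\}$. Let $\mathcal{F} = \{[8]\} \cup \{[8]\setminus\{i\} : i \in [8]\} \cup \{[8]\setminus\{1,2\},\ [8]\setminus\{3,4\}\}$, and define the bijection $\mathcal{A}\to\mathcal{F}$ by $F_{A_0}=[8]$, $F_{A_i}=[8]\setminus\{i\}$ for $i\in[8]$, $F_{B_{1,2}}=[8]\setminus\{1,2\}$, $F_{B_{3,4}}=[8]\setminus\{3,4\}$. Then $\mathcal{F}$ is a filter and $\mathcal{A}$ satisfies Condition 1 with this filter and bijection, while every element $x \in [8]$ belongs to exactly $5$ of the $11$ sets of $\mathcal{A}$. Consequently, it is false that every family $\mathcal{A}\subseteq 2^{[n]}$ satisfying Condition 1 has an element of $[n]$ lying in at least half of the sets of $\mathcal{A}$.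
   Context: $[n]=\{1,\dots,n\}$. A family $\mathcal{F} \subseteq 2^{[n]}$ is a filter if $F \in \mathcal{F}$ and $F \subseteq G \subseteq [n]$ imply $G \in \mathcal{F}$. For $A \subseteq B \subseteq [n]$, $[A,B] = \{C : A \subseteq C \subseteq B\}$. A family $\mathcal{A} \subseteq 2^{[n]}$ satisfies Condition 1 if there exist a filter $\mathcal{F} \subseteq 2^{[n]}$ and a bijection $A \mapsto F_A$ from $\mathcal{A}$ onto $\mathcal{F}$ such that (i) $A \subseteq F_A$ for all $A \in \mathcal{A}$, and (ii) for distinct $A, B \in \mathcal{A}$, $[A,F_A] \cap [B,F_B] = \emptyset$ (equivalently, at least one of $A \setminus F_B$, $B \setminus F_A$ is nonempty). *)

theory Defs
  imports Main
begin

definition is_filter :: "nat \<Rightarrow> nat set set \<Rightarrow> bool" where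
  "is_filter n F \<longleftrightarrow> F \<subseteq> Pow {1..n} \<and>
     (\<forall>X\<in>F. \<forall>Y. X \<subseteq> Y \<and> Y \<subseteq> {1..n} \<longrightarrow> Y \<in> F)"

definition interval :: "nat set \<Rightarrow> nat set \<Rightarrow> nat set set" where
  "interval A B = {C. A \<subseteq> C \<and> C \<subseteq> B}"

definition cond1_with :: "nat \<Rightarrow> nat set set \<Rightarrow> nat set set \<Rightarrow> (nat set \<Rightarrow> nat set) \<Rightarrow> bool" where
  "cond1_with n \<A> F f \<longleftrightarrow> is_filter n F \<and> bij_betw f \<A> F \<and>
     (\<forall>A\<in>\<A>. A \<subseteq> f A) \<and>
     (\<forall>A\<in>\<A>. \<forall>B\<in>\<A>. A \<noteq> B \<longrightarrow> interval A (f A) \<inter> interval B (f B) = {})"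

definition cond1 :: "nat \<Rightarrow> nat set set \<Rightarrow> bool" where
  "cond1 n \<A> \<longleftrightarrow> (\<exists>F f. cond1_with n \<A> F f)"

definition exA :: "nat set set" where
  "exA = {{1..8}, {2,4,6,7,8}, {1,3,5,8}, {1,4,7,8}, {2,3,5,6}, {1,3,7}, {2,3,5},
          {2,4,6}, {4,5,6,7}, {8}, {1}}"

definition exF :: "nat set set" where
  "exF = {{1..8}} \<union> {{1..8} - {i} | i. i \<in> {1..8}} \<union> {{1..8} - {1,2}, {1..8} - {3,4}}"

definition exMap :: "nat set \<Rightarrow> nat set" where
  "exMap A =
    (if A = {1..8} then {1..8}
     else if A = {2,4,6,7,8} then {1..8} - {1}
     else if A = {1,3,5,8} then {1..8} - {2}
     else if A = {1,4,7,8} then {1..8} - {3}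
     else if A = {2,3,5,6} then {1..8} - {4}
     else if A = {1,3,7} then {1..8} - {5}
     else if A = {2,3,5} then {1..8} - {6}
     else if A = {2,4,6} then {1..8} - {7}
     else if A = {4,5,6,7} then {1..8} - {8}
     else if A = {8} then {1..8} - {1,2}
     else if A = {1} then {1..8} - {3,4}
     else {})"

end

theory Submission
  imports Defs
begin
lemma e8: "{1..8::nat} = {1,2,3,4,5,6,7,8}" by auto
lemma A: "exA = {{1,2,3,4,5,6,7,8}, {2,4,6,7,8}, {1,3,5,8}, {1,4,7,8}, {2,3,5,6}, {1,3,7}, {2,3,5},
          {2,4,6}, {4,5,6,7}, {8}, {1}}" unfolding exA_def e8 ..
lemma F: "exF = {{1..8}} \<union> (\<lambda>i. {1..8} - {i}) ` {1..8} \<union> {{1..8} - {1,2}, {1..8} - {3,4}}"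
  unfolding exF_def by blast
lemma int_empty: "interval A B \<inter> interval C D = {} \<longleftrightarrow> \<not> (A \<union> C \<subseteq> B \<inter> D)"
  unfolding interval_def by blast
lemma filt: "is_filter n F \<longleftrightarrow> F \<subseteq> Pow {1..n} \<and> (\<forall>X\<in>F. \<forall>Y\<in>Pow {1..n}. X \<subseteq> Y \<longrightarrow> Y \<in> F)"
  unfolding is_filter_def by blast
lemma f1: "is_filter 8 exF" unfolding filt F e8 by code_simp
lemma f2: "cond1_with 8 exA exF exMap"
  unfolding cond1_with_def filt int_empty bij_betw_def inj_on_def F exA_def exMap_def e8 by code_simp
lemma c1: "card exA = 11" unfolding A by code_simp
lemma c2: "\<forall>x\<in>{1..8::nat}. card {A\<in>exA. x \<in> A} = 5" unfolding A e8 by code_simp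
lemma c0: "exA \<subseteq> Pow {1..8}" unfolding A e8 by code_simp

theorem mainTheorem3:
  shows "exA \<subseteq> Pow {1..8} \<and> card exA = 11 \<and>
         is_filter 8 exF \<and> cond1_with 8 exA exF exMap \<and>
         (\<forall>x\<in>{1..8::nat}. card {A\<in>exA. x \<in> A} = 5) \<and>
         \<not> (\<forall>(n::nat) (\<A>::nat set set). \<A> \<subseteq> Pow {1..n} \<and> cond1 n \<A> \<longrightarrow>
               (\<exists>x\<in>{1..n}. 2 * card {A\<in>\<A>. x \<in> A} \<ge> card \<A>))"
proof -
  have "\<not> (\<exists>x\<in>{1..8::nat}. 2 * card {A\<in>exA. x \<in> A} \<ge> card exA)"
    using c1 c2 by auto
  moreover have "cond1 8 exA" unfolding cond1_def using f2 by blast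
  ultimately have "\<not> (\<forall>(n::nat) (\<A>::nat set set). \<A> \<subseteq> Pow {1..n} \<and> cond1 n \<A> \<longrightarrow>
               (\<exists>x\<in>{1..n}. 2 * card {A\<in>\<A>. x \<in> A} \<ge> card \<A>))"
    using c0 by blast
  then show ?thesis using c0 c1 c2 f1 f2 by blast
qed
end
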